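(* For all real numbers $a\le b$, the closed interval $[a,b]$ contains only finitely many cutoffs.
   Context: For a real number $\alpha\ge 1$, define the integer sequence $(P^\alpha_i)_{i\ge 0}$ by $P^\alpha_0=0$, $P^\alpha_1=1$, and for $k\ge 1$, $P^\alpha_{k+1}=P^\alpha_k+P^\alpha_j$, where $j\ge1$ is the unique index with $\alpha P^\alpha_{j-1}<P^\alpha_k\le \alpha P^\alpha_j$. A cutoff is a real number $\alpha\ge 1$ such that for every real $\beta$ with $1\le\beta<\alpha$, the sequences $(P^\alpha_i)$ and $(P^\beta_i)$ are not identical. *)

theory Defs
  imports Complex_Main
begin

fun Plist :: "real \<Rightarrow> nat \<Rightarrow> nat list" where
  "Plist \<alpha> 0 = [0, 1]"
| "Plist \<alpha> (Suc n) =
     (let xs = Plist \<alpha> n; pk = last xs;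
          j = (THE j. 1 \<le> j \<and> j < length xs \<and>
                  \<alpha> * real (xs ! (j - 1)) < real pk \<and> real pk \<le> \<alpha> * real (xs ! j))
      in xs @ [pk + xs ! j])"

definition P :: "real \<Rightarrow> nat \<Rightarrow> nat" where
  "P \<alpha> i = Plist \<alpha> i ! i"

definition cutoff :: "real \<Rightarrow> bool" where
  "cutoff \<alpha> \<longleftrightarrow> 1 \<le> \<alpha> \<and> (\<forall>\<beta>. 1 \<le> \<beta> \<and> \<beta> < \<alpha> \<longrightarrow> P \<alpha> \<noteq> P \<beta>)"

end

theory Submission
  imports Defs "HOL-Analysis.Analysis"
begin

definition T :: "bool \<Rightarrow> real \<Rightarrow> nat \<Rightarrow> nat \<Rightarrow> bool" where
  "T s \<alpha> p x \<longleftrightarrow> (if s then real p \<le> \<alpha> * real x else real p < \<alpha> * real x)"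

fun Glist :: "bool \<Rightarrow> real \<Rightarrow> nat \<Rightarrow> nat list" where
  "Glist s \<alpha> 0 = [0, 1]"
| "Glist s \<alpha> (Suc n) =
     (let xs = Glist s \<alpha> n; pk = last xs;
          j = (THE j. 1 \<le> j \<and> j < length xs \<and>
                  \<not> T s \<alpha> pk (xs ! (j - 1)) \<and> T s \<alpha> pk (xs ! j))
      in xs @ [pk + xs ! j])"

declare Glist.simps(2)[simp del]

lemma Plist_Glist: "Plist \<alpha> n = Glist True \<alpha> n"
  by (induction n) (simp_all add: T_def Let_def not_le Glist.simps(2))

lemma Glist_len: "length (Glist s \<alpha> n) = n + 2"
  by (induction n) (simp_all add: Let_def Glist.simps(2))

lemma Glist_prefix1: "i < n + 2 \<Longrightarrow> Glist s \<alpha> (Suc n) ! i = Glist s \<alpha> n ! i"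
  by (simp add: Let_def nth_append Glist_len Glist.simps(2))

lemma Glist_prefix: "n \<le> m \<Longrightarrow> i < n + 2 \<Longrightarrow> Glist s \<alpha> m ! i = Glist s \<alpha> n ! i"
proof (induction m rule: dec_induct)
  case base then show ?case by simp
next
  case (step m) then show ?case using Glist_prefix1[of i m] by simp
qed

definition g :: "bool \<Rightarrow> real \<Rightarrow> nat \<Rightarrow> nat" where
  "g s \<alpha> i = Glist s \<alpha> i ! i"

lemma Glist_g: assumes "i \<le> n + 1" shows "Glist s \<alpha> n ! i = g s \<alpha> i"
proof (cases "i \<le> n")
  case True then show ?thesis unfolding g_def using Glist_prefix[of i n i] by simp
next
  case False
  then have "i = n + 1" using \<open>i \<le> n + 1\<close> by simp
  then show ?thesis unfolding g_def using Glist_prefix1[of i n s \<alpha>] by simp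
qed

lemma P_g: "P \<alpha> = g True \<alpha>"
  by (rule ext) (simp add: P_def g_def Plist_Glist)

lemma g0: "g s \<alpha> 0 = 0" by (simp add: g_def)
lemma g1: "g s \<alpha> 1 = 1"
  using Glist_g[of 1 0 s \<alpha>] by simp

lemma g_step: "g s \<alpha> (n + 2) = g s \<alpha> (n + 1) + Glist s \<alpha> n ! (THE j. 1 \<le> j \<and> j \<le> n + 1 \<and>
   \<not> T s \<alpha> (g s \<alpha> (n + 1)) (g s \<alpha> (j - 1)) \<and> T s \<alpha> (g s \<alpha> (n + 1)) (g s \<alpha> j))"
proof -
  let ?xs = "Glist s \<alpha> n"
  have lastx: "last ?xs = g s \<alpha> (n + 1)"
    using Glist_g[of "n+1" n s \<alpha>] Glist_len[of s \<alpha> n]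
  proof -
    have "?xs \<noteq> []" using Glist_len[of s \<alpha> n] by auto
    then have "last ?xs = ?xs ! (n + 1)" using Glist_len[of s \<alpha> n] by (simp add: last_conv_nth)
    then show ?thesis using Glist_g[of "n+1" n s \<alpha>] by simp
  qed
  have eqP: "(\<lambda>j. 1 \<le> j \<and> j < length ?xs \<and>
                  \<not> T s \<alpha> (last ?xs) (?xs ! (j - 1)) \<and> T s \<alpha> (last ?xs) (?xs ! j))
     = (\<lambda>j. 1 \<le> j \<and> j \<le> n + 1 \<and>
   \<not> T s \<alpha> (g s \<alpha> (n + 1)) (g s \<alpha> (j - 1)) \<and> T s \<alpha> (g s \<alpha> (n + 1)) (g s \<alpha> j))"
  proof (rule ext)
    fix j show "(1 \<le> j \<and> j < length ?xs \<and>
                  \<not> T s \<alpha> (last ?xs) (?xs ! (j - 1)) \<and> T s \<alpha> (last ?xs) (?xs ! j))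
     = (1 \<le> j \<and> j \<le> n + 1 \<and>
   \<not> T s \<alpha> (g s \<alpha> (n + 1)) (g s \<alpha> (j - 1)) \<and> T s \<alpha> (g s \<alpha> (n + 1)) (g s \<alpha> j))"
      using Glist_g[of j n s \<alpha>] Glist_g[of "j-1" n s \<alpha>] Glist_len[of s \<alpha> n] lastx
      by (cases "j \<le> n + 1") auto
  qed
  define J where "J = (THE j. 1 \<le> j \<and> j \<le> n + 1 \<and>
   \<not> T s \<alpha> (g s \<alpha> (n + 1)) (g s \<alpha> (j - 1)) \<and> T s \<alpha> (g s \<alpha> (n + 1)) (g s \<alpha> j))"
  have "g s \<alpha> (n + 2) = Glist s \<alpha> (Suc (n+1)) ! (n+2)" unfolding g_def by (simp only: add_2_eq_Suc' add_Suc_right Suc_eq_plus1)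
  also have "\<dots> = Glist s \<alpha> (Suc n) ! (n+2)" using Glist_prefix1[of "n+2" "n+1" s \<alpha>] by (simp only: Suc_eq_plus1 add_less_mono1)
  also have "\<dots> = g s \<alpha> (n + 1) + ?xs ! J"
  proof -
    have "Glist s \<alpha> (Suc n) = ?xs @ [last ?xs + ?xs ! (THE j. 1 \<le> j \<and> j < length ?xs \<and>
                  \<not> T s \<alpha> (last ?xs) (?xs ! (j - 1)) \<and> T s \<alpha> (last ?xs) (?xs ! j))]"
      by (simp only: Glist.simps(2) Let_def)
    also have "\<dots> = ?xs @ [g s \<alpha> (n + 1) + ?xs ! J]" unfolding eqP by (simp only: J_def lastx)
    finally show ?thesis by (simp add: nth_append Glist_len)
  qed
  finally show ?thesis unfolding J_def .
qed

lemma T_le: "T s \<alpha> p x \<Longrightarrow> real p \<le> \<alpha> * real x"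
  by (auto simp: T_def split: if_splits)
lemma T_not: "\<not> T s \<alpha> p x \<Longrightarrow> \<alpha> * real x \<le> real p"
  by (auto simp: T_def split: if_splits)
lemma T_not_True: "\<not> T True \<alpha> p x \<longleftrightarrow> \<alpha> * real x < real p"
  by (auto simp: T_def)
lemma T_True: "T True \<alpha> p x \<longleftrightarrow> real p \<le> \<alpha> * real x"
  by (auto simp: T_def)
lemma T_False: "T False \<alpha> p x \<longleftrightarrow> real p < \<alpha> * real x"
  by (auto simp: T_def)
lemma T_mono: "0 \<le> \<alpha> \<Longrightarrow> T s \<alpha> p x \<Longrightarrow> x \<le> y \<Longrightarrow> T s \<alpha> p y"
proof -
  assume a: "0 \<le> \<alpha>" "T s \<alpha> p x" "x \<le> y"
  have "\<alpha> * real x \<le> \<alpha> * real y" using a by (simp add: mult_left_mono)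
  then show ?thesis using a by (auto simp: T_def split: if_splits)
qed
lemma T_anti: "T s \<alpha> p x \<Longrightarrow> p' \<le> p \<Longrightarrow> T s \<alpha> p' x"
  by (auto simp: T_def split: if_splits)
lemma T_add: "T s \<alpha> a x \<Longrightarrow> T s \<alpha> b y \<Longrightarrow> T s \<alpha> (a + b) (x + y)"
  by (auto simp: T_def distrib_left split: if_splits)
lemma T_self: "1 \<le> \<alpha> \<Longrightarrow> s \<or> 1 < \<alpha> \<Longrightarrow> 1 \<le> p \<Longrightarrow> T s \<alpha> p p"
proof -
  assume a: "1 \<le> \<alpha>" "s \<or> 1 < \<alpha>" "1 \<le> p"
  have "real p \<le> \<alpha> * real p" using a by (simp add: mult_le_cancel_right1)
  moreover have "1 < \<alpha> \<Longrightarrow> real p < \<alpha> * real p" using a by simp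
  ultimately show ?thesis using a by (auto simp: T_def)
qed
lemma T_zero: "1 \<le> p \<Longrightarrow> \<not> T s \<alpha> p 0"
  by (auto simp: T_def)

definition cond :: "bool \<Rightarrow> real \<Rightarrow> (nat \<Rightarrow> nat) \<Rightarrow> nat \<Rightarrow> nat \<Rightarrow> bool" where
  "cond s \<alpha> p k j \<longleftrightarrow> 1 \<le> j \<and> j \<le> k \<and> \<not> T s \<alpha> (p k) (p (j - 1)) \<and> T s \<alpha> (p k) (p j)"

definition good :: "bool \<Rightarrow> real \<Rightarrow> (nat \<Rightarrow> nat) \<Rightarrow> bool" where
  "good s \<alpha> p \<longleftrightarrow> p 0 = 0 \<and> p 1 = 1 \<and> (\<forall>k\<ge>1. \<exists>j. cond s \<alpha> p k j \<and> p (k + 1) = p k + p j)"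

lemma mono_upto: "(\<forall>i<k. f i < f (Suc i)) \<Longrightarrow> a \<le> b \<Longrightarrow> b \<le> k \<Longrightarrow> (f a :: nat) \<le> f b"
proof (induction b)
  case 0 then show ?case by simp
next
  case (Suc b)
  show ?case
  proof (cases "a = Suc b")
    case True then show ?thesis by simp
  next
    case False
    then have "a \<le> b" "b < k" using Suc.prems by auto
    then have "f a \<le> f b" "f b < f (Suc b)" using Suc by auto
    then show ?thesis by simp
  qed
qed

lemma cond_unique:
  assumes "0 \<le> \<alpha>" "\<And>a b. a \<le> b \<Longrightarrow> b \<le> k \<Longrightarrow> p a \<le> p b"
    and "cond s \<alpha> p k j" "cond s \<alpha> p k j'"
  shows "j = j'"
proof (rule ccontr)
  assume ne: "j \<noteq> j'"
  have key: "False" if c1: "cond s \<alpha> p k a" and c2: "cond s \<alpha> p k b" and lt: "a < b" for a b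
  proof -
    have "T s \<alpha> (p k) (p a)" using c1 by (simp add: cond_def)
    moreover have "b \<le> k" using c2 by (simp add: cond_def)
    then have "p a \<le> p (b - 1)" using assms(2)[of a "b-1"] lt by simp
    ultimately have "T s \<alpha> (p k) (p (b - 1))" using T_mono assms(1) by blast
    then show False using c2 by (simp add: cond_def)
  qed
  have "\<not> j < j'" using key[OF assms(3) assms(4)] by blast
  moreover have "\<not> j' < j" using key[OF assms(4) assms(3)] by blast
  ultimately show False using ne by simp
qed

lemma cond_exists:
  assumes "1 \<le> \<alpha>" "s \<or> 1 < \<alpha>" "1 \<le> k" "p 0 = 0" "1 \<le> p k"
  shows "\<exists>j. cond s \<alpha> p k j"
proof -
  define j0 where "j0 = (LEAST j. T s \<alpha> (p k) (p j))"
  have Tk: "T s \<alpha> (p k) (p k)" using T_self assms by blast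
  then have Tj0: "T s \<alpha> (p k) (p j0)" unfolding j0_def by (rule LeastI)
  have j0k: "j0 \<le> k" unfolding j0_def using Tk by (rule Least_le)
  have j0pos: "1 \<le> j0"
  proof (rule ccontr)
    assume "\<not> 1 \<le> j0" then have "j0 = 0" by simp
    then show False using Tj0 T_zero[OF assms(5)] assms(4) by simp
  qed
  have "\<not> T s \<alpha> (p k) (p (j0 - 1))"
    using not_less_Least[of "j0 - 1" "\<lambda>j. T s \<alpha> (p k) (p j)"] j0pos unfolding j0_def by simp
  then show ?thesis using Tj0 j0k j0pos unfolding cond_def by blast
qed

lemma good_pos: "good s \<alpha> p \<Longrightarrow> 1 \<le> k \<Longrightarrow> 1 \<le> p k"
proof (induction k)
  case 0 then show ?case by simp
next
  case (Suc k)
  show ?case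
  proof (cases "k = 0")
    case True then show ?thesis using Suc by (simp add: good_def)
  next
    case False
    have "1 \<le> k" using False by simp
    then obtain j where "p (k + 1) = p k + p j" using Suc.prems(1) unfolding good_def by blast
    then show ?thesis using Suc False by simp
  qed
qed

lemma good_smono: assumes "good s \<alpha> p" shows "p k < p (Suc k)"
proof (cases "k = 0")
  case True then show ?thesis using assms by (simp add: good_def)
next
  case False
  then have "1 \<le> k" by simp
  then obtain j where j: "cond s \<alpha> p k j" "p (k + 1) = p k + p j" using assms unfolding good_def by blast
  then have "1 \<le> p j" using good_pos[OF assms] by (simp add: cond_def)
  then show ?thesis using j by simp
qed

lemma good_mono: assumes "good s \<alpha> p" "a \<le> b" shows "p a \<le> p b"
  using lift_Suc_mono_le[of p, OF less_imp_le[OF good_smono[OF assms(1)]] assms(2)] .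

lemma good_strict: assumes "good s \<alpha> p" "a < b" shows "p a < p b"
  using lift_Suc_mono_less[of p, OF good_smono[OF assms(1)] assms(2)] .

lemma good_unique:
  assumes "0 \<le> \<alpha>" "good s \<alpha> p" "good s \<alpha> q"
  shows "p = q"
proof (rule ext)
  fix n show "p n = q n"
  proof (induction n rule: less_induct)
    case (less n)
    show ?case
    proof (cases "n \<le> 1")
      case True then show ?thesis using assms by (cases n) (auto simp: good_def)
    next
      case False
      define k where "k = n - 1"
      have k: "n = k + 1" "1 \<le> k" using False unfolding k_def by auto
      obtain j where j: "cond s \<alpha> p k j" "p (k + 1) = p k + p j" using assms(2) k by (auto simp: good_def)
      obtain j' where j': "cond s \<alpha> q k j'" "q (k + 1) = q k + q j'" using assms(3) k by (auto simp: good_def)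
      have eqs: "\<And>i. i \<le> k \<Longrightarrow> p i = q i" using less k by simp
      have "cond s \<alpha> q k j" using j(1) eqs unfolding cond_def by auto
      then have "j = j'" using cond_unique[OF assms(1) _ _ j'(1)] good_mono[OF assms(3)] by blast
      then show ?thesis using j j' k eqs \<open>cond s \<alpha> q k j\<close> by (simp add: cond_def)
    qed
  qed
qed

lemma g_good:
  assumes "1 \<le> \<alpha>" "s \<or> 1 < \<alpha>"
  shows "good s \<alpha> (g s \<alpha>)"
proof -
  let ?g = "g s \<alpha>"
  have step: "cond s \<alpha> ?g k (THE j. cond s \<alpha> ?g k j) \<and> ?g (k + 1) = ?g k + ?g (THE j. cond s \<alpha> ?g k j)"
    if k1: "1 \<le> k" and mk: "\<forall>i<k. ?g i < ?g (Suc i)" for k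
  proof -
    obtain n where n: "k = n + 1" using k1 by (metis add.commute le_add_diff_inverse)
    have mono: "\<And>a b. a \<le> b \<Longrightarrow> b \<le> k \<Longrightarrow> ?g a \<le> ?g b" using mono_upto[OF mk] by blast
    have "1 \<le> ?g k" using mono[of 1 k] k1 g1 by simp
    then obtain j where "cond s \<alpha> ?g k j" using cond_exists[OF assms k1] g0 by blast
    moreover have "\<And>a b. cond s \<alpha> ?g k a \<Longrightarrow> cond s \<alpha> ?g k b \<Longrightarrow> a = b"
      using cond_unique[of \<alpha> k ?g s, OF _ mono] assms(1) by simp
    ultimately have ex1: "\<exists>!j. cond s \<alpha> ?g k j" by blast
    have c: "cond s \<alpha> ?g k (THE j. cond s \<alpha> ?g k j)" using theI'[OF ex1] .
    have "?g (k + 1) = ?g k + Glist s \<alpha> n ! (THE j. cond s \<alpha> ?g k j)"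
      using g_step[of s \<alpha> n] n unfolding cond_def by (simp add: add.commute)
    also have "Glist s \<alpha> n ! (THE j. cond s \<alpha> ?g k j) = ?g (THE j. cond s \<alpha> ?g k j)"
      using c n Glist_g unfolding cond_def by simp
    finally show ?thesis using c by simp
  qed
  have mono_all: "\<forall>i<n. ?g i < ?g (Suc i)" for n
  proof (induction n)
    case 0 then show ?case by simp
  next
    case (Suc n)
    show ?case
    proof (cases "n = 0")
      case True then show ?thesis using g0[of s \<alpha>] g1[of s \<alpha>] by simp
    next
      case False
      then have s: "cond s \<alpha> ?g n (THE j. cond s \<alpha> ?g n j) \<and> ?g (n + 1) = ?g n + ?g (THE j. cond s \<alpha> ?g n j)"
        using step[of n] Suc by simp
      have "1 \<le> ?g (THE j. cond s \<alpha> ?g n j)"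
        using mono_upto[OF Suc.IH, of 1 "THE j. cond s \<alpha> ?g n j"] s g1 unfolding cond_def by simp
      then show ?thesis using s Suc.IH less_Suc_eq by auto
    qed
  qed
  show ?thesis unfolding good_def using step mono_all g0 g1 by blast
qed

lemma P_good: "1 \<le> \<alpha> \<Longrightarrow> good True \<alpha> (P \<alpha>)"
  using g_good[of \<alpha> True] P_g by simp

lemma P_eq: "1 \<le> \<beta> \<Longrightarrow> good True \<beta> q \<Longrightarrow> P \<beta> = q"
  using good_unique[of \<beta> True "P \<beta>" q] P_good by simp

definition jf :: "bool \<Rightarrow> real \<Rightarrow> (nat \<Rightarrow> nat) \<Rightarrow> nat \<Rightarrow> nat" where
  "jf s \<alpha> p k = (THE j. cond s \<alpha> p k j)"

lemma jf_unique:
  assumes "good s \<alpha> p" "0 \<le> \<alpha>" "cond s \<alpha> p k j"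
  shows "jf s \<alpha> p k = j"
proof -
  have "\<And>a b. cond s \<alpha> p k a \<Longrightarrow> cond s \<alpha> p k b \<Longrightarrow> a = b"
    using cond_unique[of \<alpha> k p s] assms(2) good_mono[OF assms(1)] by blast
  then show ?thesis unfolding jf_def using assms(3) by blast
qed

lemma jf:
  assumes "good s \<alpha> p" "0 \<le> \<alpha>" "1 \<le> k"
  shows "cond s \<alpha> p k (jf s \<alpha> p k) \<and> p (k + 1) = p k + p (jf s \<alpha> p k)"
proof -
  obtain j where j: "cond s \<alpha> p k j" "p (k + 1) = p k + p j" using assms unfolding good_def by blast
  then show ?thesis using jf_unique[OF assms(1,2) j(1)] by simp
qed

lemma jf_bounds:
  assumes "good s \<alpha> p" "0 \<le> \<alpha>" "1 \<le> k"
  shows "1 \<le> jf s \<alpha> p k" "jf s \<alpha> p k \<le> k"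
    "\<not> T s \<alpha> (p k) (p (jf s \<alpha> p k - 1))" "T s \<alpha> (p k) (p (jf s \<alpha> p k))"
    "p (k + 1) = p k + p (jf s \<alpha> p k)"
  using jf[OF assms] unfolding cond_def by auto

lemma jf_succ_le:
  assumes "good s \<alpha> p" "0 \<le> \<alpha>" "1 \<le> k"
  shows "jf s \<alpha> p (k + 1) \<le> jf s \<alpha> p k + 1"
proof (rule ccontr)
  let ?j = "jf s \<alpha> p k" and ?j' = "jf s \<alpha> p (k + 1)"
  assume "\<not> ?j' \<le> ?j + 1"
  then have lt: "?j + 1 \<le> ?j' - 1" by simp
  have b: "1 \<le> ?j" "T s \<alpha> (p k) (p ?j)" "p (k + 1) = p k + p ?j" using jf_bounds[OF assms] by auto
  have b2: "T s \<alpha> (p ?j) (p (jf s \<alpha> p ?j))" "p (?j + 1) = p ?j + p (jf s \<alpha> p ?j)"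
    using jf_bounds[OF assms(1,2) b(1)] by auto
  have "T s \<alpha> (p (k + 1)) (p (?j + 1))" using T_add[OF b(2) b2(1)] b(3) b2(2) by simp
  then have "T s \<alpha> (p (k + 1)) (p (?j' - 1))" using T_mono[OF assms(2)] good_mono[OF assms(1) lt] by blast
  moreover have "\<not> T s \<alpha> (p (k + 1)) (p (?j' - 1))" using jf_bounds[OF assms(1,2), of "k+1"] by simp
  ultimately show False by simp
qed

lemma jf_mono1:
  assumes "good s \<alpha> p" "0 \<le> \<alpha>" "1 \<le> k"
  shows "jf s \<alpha> p k \<le> jf s \<alpha> p (k + 1)"
proof (rule ccontr)
  let ?j = "jf s \<alpha> p k" and ?j' = "jf s \<alpha> p (k + 1)"
  assume "\<not> ?j \<le> ?j'"
  then have lt: "?j' \<le> ?j - 1" by simp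
  have "T s \<alpha> (p (k + 1)) (p ?j')" using jf_bounds[OF assms(1,2), of "k+1"] by simp
  then have "T s \<alpha> (p (k + 1)) (p (?j - 1))" using T_mono[OF assms(2)] good_mono[OF assms(1) lt] by blast
  then have "T s \<alpha> (p k) (p (?j - 1))" using T_anti good_mono[OF assms(1), of k "k+1"] by simp
  moreover have "\<not> T s \<alpha> (p k) (p (?j - 1))" using jf_bounds[OF assms] by simp
  ultimately show False by simp
qed

lemma growth:
  assumes "good s \<alpha> p" "1 \<le> \<alpha>" "1 \<le> j"
  shows "real (p j) * (1 + real t / \<alpha>) \<le> real (p (j + t))"
proof (induction t)
  case 0 then show ?case by simp
next
  case (Suc t)
  have a0: "0 \<le> \<alpha>" using assms by simp
  have b: "T s \<alpha> (p (j + t)) (p (jf s \<alpha> p (j + t)))" "p (j + t + 1) = p (j + t) + p (jf s \<alpha> p (j + t))"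
    using jf_bounds[OF assms(1) a0, of "j + t"] assms(3) by auto
  have "real (p (j + t)) \<le> \<alpha> * real (p (jf s \<alpha> p (j + t)))" using T_le[OF b(1)] .
  moreover have "real (p j) \<le> real (p (j + t))" using good_mono[OF assms(1), of j "j+t"] by simp
  ultimately have "real (p j) / \<alpha> \<le> real (p (jf s \<alpha> p (j + t)))"
    using assms(2) by (simp add: divide_le_eq mult.commute)
  then have "real (p j) * (1 + real (Suc t) / \<alpha>) \<le> real (p (j + t)) + real (p (jf s \<alpha> p (j + t)))"
    using Suc.IH by (simp add: distrib_left add_divide_distrib)
  then show ?case using b(2) by simp
qed

lemma lag_bound:
  assumes "good s \<alpha> p" "1 \<le> \<alpha>" "1 \<le> k"
  shows "real (k - jf s \<alpha> p k) \<le> \<alpha> * \<alpha>"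
proof -
  let ?j = "jf s \<alpha> p k"
  have a0: "0 \<le> \<alpha>" using assms by simp
  have b: "1 \<le> ?j" "?j \<le> k" "T s \<alpha> (p k) (p ?j)" using jf_bounds[OF assms(1) a0 assms(3)] by auto
  have g: "real (p ?j) * (1 + real (k - ?j) / \<alpha>) \<le> real (p k)"
    using growth[OF assms(1,2) b(1), of "k - ?j"] b(2) by simp
  have "real (p k) \<le> \<alpha> * real (p ?j)" using T_le[OF b(3)] .
  with g have "real (p ?j) * (1 + real (k - ?j) / \<alpha>) \<le> real (p ?j) * \<alpha>" by (simp add: mult.commute)
  moreover have "1 \<le> p ?j" using good_pos[OF assms(1) b(1)] .
  ultimately have "1 + real (k - ?j) / \<alpha> \<le> \<alpha>" by (simp add: mult_le_cancel_left_pos)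
  then have "real (k - ?j) / \<alpha> \<le> \<alpha>" by simp
  then show ?thesis using assms(2) by (simp add: divide_le_eq)
qed

lemma lag_mono:
  assumes "good s \<alpha> p" "0 \<le> \<alpha>" "1 \<le> K" "K \<le> k"
  shows "K - jf s \<alpha> p K \<le> k - jf s \<alpha> p k"
  using assms(4)
proof (induction k rule: dec_induct)
  case base then show ?case by simp
next
  case (step k)
  have "jf s \<alpha> p (k + 1) \<le> jf s \<alpha> p k + 1" using jf_succ_le[OF assms(1,2)] step assms(3) by simp
  moreover have "jf s \<alpha> p k \<le> k" using jf_bounds[OF assms(1,2)] step assms(3) by simp
  ultimately show ?case using step by simp
qed

lemma lag_eventually:
  assumes "good s \<alpha> p" "1 \<le> \<alpha>"
  shows "\<exists>K m. 1 \<le> K \<and> (\<forall>k\<ge>K. jf s \<alpha> p k + m = k)"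
proof -
  have a0: "0 \<le> \<alpha>" using assms by simp
  define d where "d k = k - jf s \<alpha> p k" for k
  define S where "S = d ` {1..}"
  have bnd: "\<forall>x\<in>S. x \<le> nat \<lceil>\<alpha> * \<alpha>\<rceil>"
  proof
    fix x assume "x \<in> S"
    then obtain k where k: "1 \<le> k" "x = d k" unfolding S_def by auto
    have "real x \<le> \<alpha> * \<alpha>" using lag_bound[OF assms k(1)] k(2) d_def by simp
    then show "x \<le> nat \<lceil>\<alpha> * \<alpha>\<rceil>" by linarith
  qed
  have fin: "finite S" using bnd finite_nat_set_iff_bounded_le by blast
  have ne: "S \<noteq> {}" unfolding S_def by auto
  have "Max S \<in> S" using fin ne by simp
  then obtain K where K: "1 \<le> K" "d K = Max S" unfolding S_def by auto
  have "\<forall>k\<ge>K. jf s \<alpha> p k + Max S = k"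
  proof (intro allI impI)
    fix k assume "K \<le> k"
    have "d K \<le> d k" using lag_mono[OF assms(1) a0 K(1) \<open>K \<le> k\<close>] d_def by simp
    moreover have "d k \<le> Max S" using fin \<open>K \<le> k\<close> K(1) unfolding S_def by simp
    moreover have "jf s \<alpha> p k \<le> k" using jf_bounds[OF assms(1) a0] \<open>K \<le> k\<close> K(1) by simp
    ultimately show "jf s \<alpha> p k + Max S = k" using K(2) d_def by simp
  qed
  then show ?thesis using K(1) by blast
qed

lemma window:
  fixes f :: "nat \<Rightarrow> real"
  assumes "\<forall>k\<ge>N + m. f (k + 1) = f k + f (k - m)" "\<forall>k. N \<le> k \<longrightarrow> k \<le> N + m \<longrightarrow> 0 < f k"
  shows "\<forall>k\<ge>N. 0 < f k"
proof (intro allI impI)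
  fix k assume "N \<le> k"
  then show "0 < f k"
  proof (induction k rule: less_induct)
    case (less k)
    show ?case
    proof (cases "k \<le> N + m")
      case True then show ?thesis using assms(2) less by simp
    next
      case False
      define k' where "k' = k - 1"
      have k': "k = k' + 1" "N + m \<le> k'" using False unfolding k'_def by auto
      then have "f k = f k' + f (k' - m)" using assms(1) by simp
      moreover have "0 < f k'" using less k' by simp
      moreover have "0 < f (k' - m)" using less k' by simp
      ultimately show ?thesis by simp
    qed
  qed
qed

lemma ev_lt1: "\<alpha> * c < x \<Longrightarrow> eventually (\<lambda>\<beta>::real. \<beta> * c < x) (at \<alpha> within S)"
proof -
  assume a: "\<alpha> * c < x"
  have "((\<lambda>\<beta>. \<beta> * c) \<longlongrightarrow> \<alpha> * c) (at \<alpha> within S)" by (intro tendsto_intros)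
  then show ?thesis using order_tendstoD(2) a by blast
qed

lemma ev_lt2: "x < \<alpha> * c \<Longrightarrow> eventually (\<lambda>\<beta>::real. x < \<beta> * c) (at \<alpha> within S)"
proof -
  assume a: "x < \<alpha> * c"
  have "((\<lambda>\<beta>. \<beta> * c) \<longlongrightarrow> \<alpha> * c) (at \<alpha> within S)" by (intro tendsto_intros)
  then show ?thesis using order_tendstoD(1) a by blast
qed

lemma right_stab:
  assumes a1: "1 \<le> \<alpha>"
  shows "eventually (\<lambda>\<beta>. P \<beta> = P \<alpha>) (at_right \<alpha>)"
proof -
  let ?p = "P \<alpha>"
  let ?j = "jf True \<alpha> ?p"
  have gp: "good True \<alpha> ?p" using P_good[OF a1] .
  have a0: "0 \<le> \<alpha>" using a1 by simp
  obtain K m where K: "1 \<le> K" "\<forall>k\<ge>K. ?j k + m = k" using lag_eventually[OF gp a1] by blast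
  define N where "N = K + m + 1"
  define F where "F = {1..N + m}"
  have ev1: "eventually (\<lambda>\<beta>. \<forall>k\<in>F. \<beta> * real (?p (?j k - 1)) < real (?p k)) (at_right \<alpha>)"
  proof (rule eventually_ball_finite)
    show "finite F" unfolding F_def by simp
    show "\<forall>k\<in>F. eventually (\<lambda>\<beta>. \<beta> * real (?p (?j k - 1)) < real (?p k)) (at_right \<alpha>)"
    proof
      fix k assume "k \<in> F"
      then have "1 \<le> k" unfolding F_def by simp
      then have "\<alpha> * real (?p (?j k - 1)) < real (?p k)"
        using jf_bounds(3)[OF gp a0] T_not_True by blast
      then show "eventually (\<lambda>\<beta>. \<beta> * real (?p (?j k - 1)) < real (?p k)) (at_right \<alpha>)"
        by (rule ev_lt1)
    qed
  qed
  have ev2: "eventually (\<lambda>\<beta>. \<alpha> < \<beta>) (at_right \<alpha>)" by (rule eventually_at_right_less)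
  show ?thesis using ev1 ev2
  proof eventually_elim
    case (elim \<beta>)
    have b0: "0 \<le> \<beta>" "1 \<le> \<beta>" using elim a1 by auto
    define f where "f k = real (?p k) - \<beta> * real (?p (k - m - 1))" for k
    have jk: "?j k = k - m" "m + 1 \<le> k" if "K \<le> k" for k
    proof -
      have "1 \<le> ?j k" using jf_bounds(1)[OF gp a0, of k] that K(1) by simp
      then show "?j k = k - m" "m + 1 \<le> k" using K(2) that by auto
    qed
    have rec: "?p (k + 1) = ?p k + ?p (k - m)" if "K \<le> k" for k
      using jf_bounds(5)[OF gp a0, of k] jk[OF that] that K(1) by simp
    have frec: "\<forall>k\<ge>N + m. f (k + 1) = f k + f (k - m)"
    proof (intro allI impI)
      fix k assume k: "N + m \<le> k"
      have r1: "?p (k + 1) = ?p k + ?p (k - m)" using rec[of k] k N_def by simp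
      have r2: "?p (k - m - 1 + 1) = ?p (k - m - 1) + ?p (k - m - 1 - m)" using rec[of "k - m - 1"] k N_def by simp
      have e1: "k - m - 1 + 1 = k - m" using k N_def by simp
      have e2: "k - m - 1 - m = k - m - m - 1" by simp
      have e3: "k + 1 - m - 1 = k - m" using k N_def by simp
      have r2': "?p (k - m) = ?p (k - m - 1) + ?p (k - m - m - 1)" using r2 unfolding e1 e2 .
      have "f (k + 1) = real (?p (k + 1)) - \<beta> * real (?p (k - m))" unfolding f_def e3 ..
      also have "\<dots> = real (?p k) + real (?p (k - m)) - \<beta> * (real (?p (k - m - 1)) + real (?p (k - m - m - 1)))"
        using r1 r2' by simp
      also have "\<dots> = f k + f (k - m)" unfolding f_def by (simp add: algebra_simps)
      finally show "f (k + 1) = f k + f (k - m)" .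
    qed
    have fpos: "\<forall>k. N \<le> k \<longrightarrow> k \<le> N + m \<longrightarrow> 0 < f k"
    proof (intro allI impI)
      fix k assume k: "N \<le> k" "k \<le> N + m"
      then have "k \<in> F" unfolding F_def N_def by simp
      then have "\<beta> * real (?p (?j k - 1)) < real (?p k)" using elim by blast
      moreover have "?j k - 1 = k - m - 1" using jk[of k] k N_def by simp
      ultimately show "0 < f k" unfolding f_def by simp
    qed
    have tail: "\<forall>k\<ge>N. 0 < f k" using window[OF frec fpos] .
    have "good True \<beta> ?p"
      unfolding good_def
    proof (intro conjI allI impI)
      show "?p 0 = 0" "?p 1 = 1" using gp by (auto simp: good_def)
      fix k :: nat assume k1: "1 \<le> k"
      have b: "1 \<le> ?j k" "?j k \<le> k" "T True \<alpha> (?p k) (?p (?j k))" "?p (k + 1) = ?p k + ?p (?j k)"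
        using jf_bounds[OF gp a0 k1] by auto
      have lt: "\<beta> * real (?p (?j k - 1)) < real (?p k)"
      proof (cases "k \<in> F")
        case True then show ?thesis using elim by blast
      next
        case False
        then have "N \<le> k" using k1 unfolding F_def N_def by auto
        then have "0 < f k" using tail by simp
        moreover have "?j k - 1 = k - m - 1" using jk[of k] \<open>N \<le> k\<close> N_def by simp
        ultimately show ?thesis unfolding f_def by simp
      qed
      have "real (?p k) \<le> \<alpha> * real (?p (?j k))" using b(3) T_True by blast
      also have "\<dots> \<le> \<beta> * real (?p (?j k))" using elim by (simp add: mult_right_mono)
      finally have le: "real (?p k) \<le> \<beta> * real (?p (?j k))" .
      have "cond True \<beta> ?p k (?j k)"
        unfolding cond_def T_True T_not_True using b(1,2) lt le by simp
      then show "\<exists>j. cond True \<beta> ?p k j \<and> ?p (k + 1) = ?p k + ?p j"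
        using b(4) by blast
    qed
    then show "P \<beta> = P \<alpha>" using P_eq b0 by blast
  qed
qed

lemma left_stab:
  assumes a1: "1 < \<alpha>"
  shows "\<exists>q. eventually (\<lambda>\<beta>. P \<beta> = q) (at_left \<alpha>)"
proof -
  let ?p = "g False \<alpha>"
  let ?j = "jf False \<alpha> ?p"
  have gp: "good False \<alpha> ?p" using g_good[of \<alpha> False] a1 by simp
  have a0: "0 \<le> \<alpha>" using a1 by simp
  have a1': "1 \<le> \<alpha>" using a1 by simp
  obtain K m where K: "1 \<le> K" "\<forall>k\<ge>K. ?j k + m = k" using lag_eventually[OF gp a1'] by blast
  define N where "N = K + m"
  define F where "F = {1..N + m}"
  have ev1: "eventually (\<lambda>\<beta>. \<forall>k\<in>F. real (?p k) < \<beta> * real (?p (?j k))) (at_left \<alpha>)"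
  proof (rule eventually_ball_finite)
    show "finite F" unfolding F_def by simp
    show "\<forall>k\<in>F. eventually (\<lambda>\<beta>. real (?p k) < \<beta> * real (?p (?j k))) (at_left \<alpha>)"
    proof
      fix k assume "k \<in> F"
      then have "1 \<le> k" unfolding F_def by simp
      then have "real (?p k) < \<alpha> * real (?p (?j k))"
        using jf_bounds(4)[OF gp a0] T_False by blast
      then show "eventually (\<lambda>\<beta>. real (?p k) < \<beta> * real (?p (?j k))) (at_left \<alpha>)"
        by (rule ev_lt2)
    qed
  qed
  have ev2: "eventually (\<lambda>\<beta>. \<beta> < \<alpha>) (at_left \<alpha>)"
    unfolding eventually_at_left_field by (rule exI[of _ "\<alpha> - 1"]) simp
  have ev3: "eventually (\<lambda>\<beta>. 1 < \<beta>) (at_left \<alpha>)"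
    using ev_lt2[of 1 \<alpha> 1 "{..<\<alpha>}"] a1 by simp
  have "eventually (\<lambda>\<beta>. P \<beta> = ?p) (at_left \<alpha>)" using ev1 ev2 ev3
  proof eventually_elim
    case (elim \<beta>)
    have b0: "0 \<le> \<beta>" "1 \<le> \<beta>" using elim by auto
    define f where "f k = \<beta> * real (?p (k - m)) - real (?p k)" for k
    have jk: "?j k = k - m" "m + 1 \<le> k" if "K \<le> k" for k
    proof -
      have "1 \<le> ?j k" using jf_bounds(1)[OF gp a0, of k] that K(1) by simp
      then show "?j k = k - m" "m + 1 \<le> k" using K(2) that by auto
    qed
    have rec: "?p (k + 1) = ?p k + ?p (k - m)" if "K \<le> k" for k
      using jf_bounds(5)[OF gp a0, of k] jk[OF that] that K(1) by simp
    have frec: "\<forall>k\<ge>N + m. f (k + 1) = f k + f (k - m)"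
    proof (intro allI impI)
      fix k assume k: "N + m \<le> k"
      have r1: "?p (k + 1) = ?p k + ?p (k - m)" using rec[of k] k N_def by simp
      have r2: "?p (k - m + 1) = ?p (k - m) + ?p (k - m - m)" using rec[of "k - m"] k N_def by simp
      have e1: "k + 1 - m = k - m + 1" using k N_def by simp
      show "f (k + 1) = f k + f (k - m)"
        unfolding f_def using r1 r2 e1 by (simp add: algebra_simps)
    qed
    have fpos: "\<forall>k. N \<le> k \<longrightarrow> k \<le> N + m \<longrightarrow> 0 < f k"
    proof (intro allI impI)
      fix k assume k: "N \<le> k" "k \<le> N + m"
      then have "k \<in> F" unfolding F_def N_def using K(1) by simp
      then have "real (?p k) < \<beta> * real (?p (?j k))" using elim by blast
      moreover have "?j k = k - m" using jk[of k] k N_def by simp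
      ultimately show "0 < f k" unfolding f_def by simp
    qed
    have tail: "\<forall>k\<ge>N. 0 < f k" using window[OF frec fpos] .
    have "good True \<beta> ?p"
      unfolding good_def
    proof (intro conjI allI impI)
      show "?p 0 = 0" "?p 1 = 1" using gp by (auto simp: good_def)
      fix k :: nat assume k1: "1 \<le> k"
      have b: "1 \<le> ?j k" "?j k \<le> k" "\<not> T False \<alpha> (?p k) (?p (?j k - 1))" "?p (k + 1) = ?p k + ?p (?j k)"
        using jf_bounds[OF gp a0 k1] by auto
      have le: "real (?p k) \<le> \<beta> * real (?p (?j k))"
      proof (cases "k \<in> F")
        case True then show ?thesis using elim by (simp add: less_imp_le)
      next
        case False
        then have "N \<le> k" using k1 unfolding F_def N_def by auto
        then have "0 < f k" using tail by simp
        moreover have "?j k = k - m" using jk[of k] \<open>N \<le> k\<close> N_def by simp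
        ultimately show ?thesis unfolding f_def by simp
      qed
      have ak: "\<alpha> * real (?p (?j k - 1)) \<le> real (?p k)" using T_not[OF b(3)] .
      have pk: "1 \<le> ?p k" using good_pos[OF gp k1] .
      have lt: "\<beta> * real (?p (?j k - 1)) < real (?p k)"
      proof (cases "?p (?j k - 1) = 0")
        case True then show ?thesis using pk by simp
      next
        case False
        then have "\<beta> * real (?p (?j k - 1)) < \<alpha> * real (?p (?j k - 1))" using elim by simp
        then show ?thesis using ak by simp
      qed
      have "cond True \<beta> ?p k (?j k)"
        unfolding cond_def T_True T_not_True using b(1,2) lt le by simp
      then show "\<exists>j. cond True \<beta> ?p k j \<and> ?p (k + 1) = ?p k + ?p j"
        using b(4) by blast
    qed
    then show "P \<beta> = ?p" using P_eq b0 by blast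
  qed
  then show ?thesis by blast
qed

lemma isolated_cutoff: "\<exists>e>0. \<forall>y. cutoff y \<longrightarrow> y \<noteq> x \<longrightarrow> e \<le> \<bar>y - x\<bar>"
proof (cases "x < 1")
  case True
  show ?thesis
  proof (intro exI conjI allI impI)
    show "0 < 1 - x" using True by simp
    fix y assume "cutoff y" "y \<noteq> x"
    then have "1 \<le> y" by (simp add: cutoff_def)
    then show "1 - x \<le> \<bar>y - x\<bar>" by simp
  qed
next
  case False
  then have x1: "1 \<le> x" by simp
  obtain b where b: "x < b" "\<forall>y>x. y < b \<longrightarrow> P y = P x"
    using right_stab[OF x1] unfolding eventually_at_right_field by blast
  obtain c where c: "c < x" "\<forall>y. cutoff y \<longrightarrow> y < x \<longrightarrow> y \<le> c"
  proof (cases "x = 1")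
    case True
    show ?thesis
    proof (rule that[of 0])
      show "0 < x" using x1 by simp
      show "\<forall>y. cutoff y \<longrightarrow> y < x \<longrightarrow> y \<le> 0" using True by (auto simp: cutoff_def)
    qed
  next
    case False
    then have "1 < x" using x1 by simp
    then obtain q where "eventually (\<lambda>\<beta>. P \<beta> = q) (at_left x)" using left_stab by blast
    then obtain b' where b': "b' < x" "\<forall>y>b'. y < x \<longrightarrow> P y = q"
      unfolding eventually_at_left_field by blast
    show ?thesis
    proof (rule that[of "max b' 1"])
      show "max b' 1 < x" using b' \<open>1 < x\<close> by simp
      show "\<forall>y. cutoff y \<longrightarrow> y < x \<longrightarrow> y \<le> max b' 1"
      proof (intro allI impI)
        fix y assume y: "cutoff y" "y < x"
        show "y \<le> max b' 1"
        proof (rule ccontr)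
          assume "\<not> y \<le> max b' 1"
          then have yy: "max b' 1 < y" by (simp only: not_le)
          define \<beta> where "\<beta> = (max b' 1 + y) / 2"
          have "1 \<le> \<beta>" "\<beta> < y" "b' < \<beta>" "\<beta> < x" using yy y unfolding \<beta>_def by auto
          then have "P \<beta> = P y" using b' yy y by auto
          then show False using y \<open>1 \<le> \<beta>\<close> \<open>\<beta> < y\<close> unfolding cutoff_def by auto
        qed
      qed
    qed
  qed
  show ?thesis
  proof (intro exI conjI allI impI)
    show "0 < min (b - x) (x - c)" using b c by simp
    fix y assume y: "cutoff y" "y \<noteq> x"
    show "min (b - x) (x - c) \<le> \<bar>y - x\<bar>"
    proof (cases "y < x")
      case True then show ?thesis using c y by force
    next
      case False
      then have "x < y" using y by simp
      have "\<not> y < b"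
      proof
        assume "y < b"
        then have "P y = P x" using b \<open>x < y\<close> by simp
        then show False using y x1 \<open>x < y\<close> unfolding cutoff_def by auto
      qed
      then show ?thesis using \<open>x < y\<close> by simp
    qed
  qed
qed

theorem mainTheorem9:
  fixes a b :: real
  assumes "a \<le> b"
  shows "finite {\<alpha> \<in> {a..b}. cutoff \<alpha>}"
proof (rule ccontr)
  assume inf: "infinite {\<alpha> \<in> {a..b}. cutoff \<alpha>}"
  obtain x where "x \<in> {a..b}" "x islimpt {\<alpha> \<in> {a..b}. cutoff \<alpha>}"
    using Heine_Borel_imp_Bolzano_Weierstrass[OF compact_Icc inf] by blast
  then have lim: "\<forall>e>0. \<exists>y\<in>{\<alpha> \<in> {a..b}. cutoff \<alpha>}. y \<noteq> x \<and> dist y x < e"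
    unfolding islimpt_approachable by blast
  obtain e where e: "e > 0" "\<forall>y. cutoff y \<longrightarrow> y \<noteq> x \<longrightarrow> e \<le> \<bar>y - x\<bar>"
    using isolated_cutoff by blast
  obtain y where "cutoff y" "y \<noteq> x" "dist y x < e" using lim e(1) by blast
  then show False using e(2) by (auto simp: dist_real_def)
qed

end
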